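(* Let $B=A^{coH}\subseteq A$ be an $H$-Hopf–Galois extension with translation map $\tau$. Then the subspace of coinvariants $$(A\otimes A)^{coH}=\{X\in A\otimes A:\ \delta^{A\otimes A}(X)=X\otimes 1_H\},$$ where $\delta^{A\otimes A}(a\otimes\tilde a)=a_{(0)}\otimes\tilde a_{(0)}\otimes a_{(1)}\tilde a_{(1)}$, coincides with $$\mathcal{C}:=\{X=\textstyle\sum a\otimes\tilde a\in A\otimes A:\ \sum a_{(0)}\otimes a_{(1)}^{\langle 1\rangle}\otimes_B a_{(1)}^{\langle 2\rangle}\tilde a=\sum a\otimes\tilde a\otimes_B 1_A \text{ in } A\otimes(A\otimes_B A)\}.$$
   Context: All algebras are unital and associative over $\mathbb{C}$; Sweedler notation with implicit summation is used. $H$ is a Hopf algebra. $A$ is a right $H$-comodule algebra with coaction $\delta^A(a)=a_{(0)}\otimes a_{(1)}$, $B=A^{coH}=\{b\in A:\delta^A(b)=b\otimes 1_H\}$. The extension is $H$-Hopf–Galois if $\chi:A\otimes_B A\to A\otimes H$, $a'\otimes_B a\mapsto a'a_{(0)}\otimes a_{(1)}$, is bijective; the translation map is $\tau(h)=\chi^{-1}(1_A\otimes h)=:h^{\langle 1\rangle}\otimes_B h^{\langle 2\rangle}$. *)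

theory Defs
  imports Complex_Main "HOL-Library.Poly_Mapping"
begin

text \<open>A tensor product V1 (x) ... (x) Vn is the quotient of the free vector
  space on V1 x ... x Vn by the subspace spanned by the multilinearity relations
  (and, for balanced tensor products over B, the balancing relations).  Elements of a
  tensor product are represented by formal sums; two representatives denote the same
  tensor iff their difference lies in the relation subspace.\<close>

type_synonym 'x fv = "'x \<Rightarrow>\<^sub>0 complex"

definition fsc :: "complex \<Rightarrow> 'x fv \<Rightarrow> 'x fv" where
  "fsc c f = Poly_Mapping.map (\<lambda>z. c * z) f"

definition gen :: "'x \<Rightarrow> 'x fv" where
  "gen x = Poly_Mapping.single x 1"

definition vext :: "(complex \<Rightarrow> 'v \<Rightarrow> 'v) \<Rightarrow> ('x \<Rightarrow> 'v::comm_monoid_add) \<Rightarrow> 'x fv \<Rightarrow> 'v" where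
  "vext sc g f = (\<Sum>x\<in>Poly_Mapping.keys f. sc (Poly_Mapping.lookup f x) (g x))"

abbreviation fext :: "('x \<Rightarrow> 'y fv) \<Rightarrow> 'x fv \<Rightarrow> 'y fv" where
  "fext \<equiv> vext fsc"

definition fmap :: "('x \<Rightarrow> 'y) \<Rightarrow> 'x fv \<Rightarrow> 'y fv" where
  "fmap \<phi> u = fext (\<lambda>x. gen (\<phi> x)) u"

definition fprod :: "('x \<Rightarrow> 'y \<Rightarrow> 'z) \<Rightarrow> 'x fv \<Rightarrow> 'y fv \<Rightarrow> 'z fv" where
  "fprod \<phi> u v = fext (\<lambda>x. fext (\<lambda>y. gen (\<phi> x y)) v) u"

definition fspan :: "'x fv set \<Rightarrow> 'x fv set" where
  "fspan S = {(\<Sum>v\<in>T. fsc (r v) v) | T r. finite T \<and> T \<subseteq> S}"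

definition bil_rel :: "(complex \<Rightarrow> 'v \<Rightarrow> 'v::ab_group_add) \<Rightarrow> (complex \<Rightarrow> 'w \<Rightarrow> 'w::ab_group_add)
    \<Rightarrow> ('v \<times> 'w) fv set" where
  "bil_rel sv sw = fspan
     ({gen (x + x', y) - gen (x, y) - gen (x', y) | x x' y. True}
    \<union> {gen (x, y + y') - gen (x, y) - gen (x, y') | x y y'. True}
    \<union> {gen (sv c x, y) - fsc c (gen (x, y)) | c x y. True}
    \<union> {gen (x, sw c y) - fsc c (gen (x, y)) | c x y. True})"

definition tri_rel :: "(complex \<Rightarrow> 'u \<Rightarrow> 'u::ab_group_add) \<Rightarrow> (complex \<Rightarrow> 'v \<Rightarrow> 'v::ab_group_add)
    \<Rightarrow> (complex \<Rightarrow> 'w \<Rightarrow> 'w::ab_group_add) \<Rightarrow> ('u \<times> 'v \<times> 'w) fv set" where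
  "tri_rel su sv sw = fspan
     ({gen (x + x', y, z) - gen (x, y, z) - gen (x', y, z) | x x' y z. True}
    \<union> {gen (x, y + y', z) - gen (x, y, z) - gen (x, y', z) | x y y' z. True}
    \<union> {gen (x, y, z + z') - gen (x, y, z) - gen (x, y, z') | x y z z'. True}
    \<union> {gen (su c x, y, z) - fsc c (gen (x, y, z)) | c x y z. True}
    \<union> {gen (x, sv c y, z) - fsc c (gen (x, y, z)) | c x y z. True}
    \<union> {gen (x, y, sw c z) - fsc c (gen (x, y, z)) | c x y z. True})"

definition bal_rel :: "(complex \<Rightarrow> 'a \<Rightarrow> 'a::ring) \<Rightarrow> 'a set \<Rightarrow> ('a \<times> 'a) fv set" where
  "bal_rel sA B = fspan (bil_rel sA sA \<union> {gen (a * b, a') - gen (a, b * a') | a b a'. b \<in> B})"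

text \<open>A (x) (A (x)_B A) = free(A x A x A) / tri_bal_rel.\<close>
definition tri_bal_rel :: "(complex \<Rightarrow> 'a \<Rightarrow> 'a::ring) \<Rightarrow> 'a set \<Rightarrow> ('a \<times> 'a \<times> 'a) fv set" where
  "tri_bal_rel sA B = fspan (tri_rel sA sA sA
      \<union> {gen (x, y * b, z) - gen (x, y, b * z) | x y b z. b \<in> B})"

definition calg :: "(complex \<Rightarrow> 'a \<Rightarrow> 'a::ring_1) \<Rightarrow> bool" where
  "calg sc \<longleftrightarrow> vector_space sc \<and>
     (\<forall>c x y. sc c (x * y) = sc c x * y \<and> sc c (x * y) = x * sc c y)"

definition hopf_algebra :: "(complex \<Rightarrow> 'h \<Rightarrow> 'h::ring_1) \<Rightarrow> ('h \<Rightarrow> ('h \<times> 'h) fv)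
    \<Rightarrow> ('h \<Rightarrow> complex) \<Rightarrow> ('h \<Rightarrow> 'h) \<Rightarrow> bool" where
  "hopf_algebra sH \<Delta> \<epsilon> S \<longleftrightarrow> calg sH
   \<comment> \<open>comultiplication: linear, coassociative, algebra map\<close>
   \<and> (\<forall>h k. \<Delta> (h + k) - (\<Delta> h + \<Delta> k) \<in> bil_rel sH sH)
   \<and> (\<forall>c h. \<Delta> (sH c h) - fsc c (\<Delta> h) \<in> bil_rel sH sH)
   \<and> (\<forall>h. fext (\<lambda>(x, y). fmap (\<lambda>(u, v). (u, v, y)) (\<Delta> x)) (\<Delta> h)
          - fext (\<lambda>(x, y). fmap (\<lambda>(u, v). (x, u, v)) (\<Delta> y)) (\<Delta> h) \<in> tri_rel sH sH sH)
   \<and> \<Delta> 1 - gen (1, 1) \<in> bil_rel sH sH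
   \<and> (\<forall>h k. \<Delta> (h * k) - fprod (\<lambda>(x, y) (x', y'). (x * x', y * y')) (\<Delta> h) (\<Delta> k) \<in> bil_rel sH sH)
   \<comment> \<open>counit: linear, counital, algebra map\<close>
   \<and> (\<forall>h k. \<epsilon> (h + k) = \<epsilon> h + \<epsilon> k) \<and> (\<forall>c h. \<epsilon> (sH c h) = c * \<epsilon> h)
   \<and> (\<forall>h. vext sH (\<lambda>(x, y). sH (\<epsilon> x) y) (\<Delta> h) = h)
   \<and> (\<forall>h. vext sH (\<lambda>(x, y). sH (\<epsilon> y) x) (\<Delta> h) = h)
   \<and> \<epsilon> 1 = 1 \<and> (\<forall>h k. \<epsilon> (h * k) = \<epsilon> h * \<epsilon> k)
   \<comment> \<open>antipode: linear, convolution inverse of the identity\<close>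
   \<and> (\<forall>h k. S (h + k) = S h + S k) \<and> (\<forall>c h. S (sH c h) = sH c (S h))
   \<and> (\<forall>h. vext sH (\<lambda>(x, y). S x * y) (\<Delta> h) = sH (\<epsilon> h) 1)
   \<and> (\<forall>h. vext sH (\<lambda>(x, y). x * S y) (\<Delta> h) = sH (\<epsilon> h) 1)"

definition comodule_algebra :: "(complex \<Rightarrow> 'a \<Rightarrow> 'a::ring_1) \<Rightarrow> (complex \<Rightarrow> 'h \<Rightarrow> 'h::ring_1)
    \<Rightarrow> ('h \<Rightarrow> ('h \<times> 'h) fv) \<Rightarrow> ('h \<Rightarrow> complex) \<Rightarrow> ('a \<Rightarrow> ('a \<times> 'h) fv) \<Rightarrow> bool" where
  "comodule_algebra sA sH \<Delta> \<epsilon> \<delta> \<longleftrightarrow> calg sA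
   \<and> (\<forall>a a'. \<delta> (a + a') - (\<delta> a + \<delta> a') \<in> bil_rel sA sH)
   \<and> (\<forall>c a. \<delta> (sA c a) - fsc c (\<delta> a) \<in> bil_rel sA sH)
   \<and> (\<forall>a. fext (\<lambda>(x, h). fmap (\<lambda>(y, k). (y, k, h)) (\<delta> x)) (\<delta> a)
          - fext (\<lambda>(x, h). fmap (\<lambda>(k, l). (x, k, l)) (\<Delta> h)) (\<delta> a) \<in> tri_rel sA sH sH)
   \<and> (\<forall>a. vext sA (\<lambda>(x, h). sA (\<epsilon> h) x) (\<delta> a) = a)
   \<and> \<delta> 1 - gen (1, 1) \<in> bil_rel sA sH
   \<and> (\<forall>a a'. \<delta> (a * a') - fprod (\<lambda>(x, h) (y, k). (x * y, h * k)) (\<delta> a) (\<delta> a') \<in> bil_rel sA sH)"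

definition coinv :: "(complex \<Rightarrow> 'a \<Rightarrow> 'a::ring_1) \<Rightarrow> (complex \<Rightarrow> 'h \<Rightarrow> 'h::ring_1)
    \<Rightarrow> ('a \<Rightarrow> ('a \<times> 'h) fv) \<Rightarrow> 'a set" where
  "coinv sA sH \<delta> = {b. \<delta> b - gen (b, 1) \<in> bil_rel sA sH}"

definition galois_map :: "('a \<Rightarrow> ('a \<times> 'h) fv) \<Rightarrow> ('a::ring_1 \<times> 'a) fv \<Rightarrow> ('a \<times> 'h) fv" where
  "galois_map \<delta> f = fext (\<lambda>(a', a). fmap (\<lambda>(x, h). (a' * x, h)) (\<delta> a)) f"

text \<open>chi is bijective as a map between the quotients A (x)_B A and A (x) H.\<close>
definition hopf_galois :: "(complex \<Rightarrow> 'a \<Rightarrow> 'a::ring_1) \<Rightarrow> (complex \<Rightarrow> 'h \<Rightarrow> 'h::ring_1)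
    \<Rightarrow> ('a \<Rightarrow> ('a \<times> 'h) fv) \<Rightarrow> bool" where
  "hopf_galois sA sH \<delta> \<longleftrightarrow>
     (\<forall>f f'. galois_map \<delta> f - galois_map \<delta> f' \<in> bil_rel sA sH
              \<longrightarrow> f - f' \<in> bal_rel sA (coinv sA sH \<delta>))
   \<and> (\<forall>g. \<exists>f. galois_map \<delta> f - g \<in> bil_rel sA sH)"

text \<open>tau is (a representative of) the translation map: tau h = chi^{-1}(1 (x) h).\<close>
definition translation_map :: "(complex \<Rightarrow> 'a \<Rightarrow> 'a::ring_1) \<Rightarrow> (complex \<Rightarrow> 'h \<Rightarrow> 'h::ring_1)
    \<Rightarrow> ('a \<Rightarrow> ('a \<times> 'h) fv) \<Rightarrow> ('h \<Rightarrow> ('a \<times> 'a) fv) \<Rightarrow> bool" where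
  "translation_map sA sH \<delta> \<tau> \<longleftrightarrow> (\<forall>h. galois_map \<delta> (\<tau> h) - gen (1, h) \<in> bil_rel sA sH)"

text \<open>(A (x) A)^{coH}, as a set of representatives (it is a union of classes).\<close>
definition tensor_coinv :: "(complex \<Rightarrow> 'a \<Rightarrow> 'a::ring_1) \<Rightarrow> (complex \<Rightarrow> 'h \<Rightarrow> 'h::ring_1)
    \<Rightarrow> ('a \<Rightarrow> ('a \<times> 'h) fv) \<Rightarrow> ('a \<times> 'a) fv set" where
  "tensor_coinv sA sH \<delta> = {X.
     fext (\<lambda>(a, a'). fprod (\<lambda>(x, h) (y, k). (x, y, h * k)) (\<delta> a) (\<delta> a')) X
       - fmap (\<lambda>(a, a'). (a, a', 1)) X \<in> tri_rel sA sA sH}"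

definition setC :: "(complex \<Rightarrow> 'a \<Rightarrow> 'a::ring_1) \<Rightarrow> (complex \<Rightarrow> 'h \<Rightarrow> 'h::ring_1)
    \<Rightarrow> ('a \<Rightarrow> ('a \<times> 'h) fv) \<Rightarrow> ('h \<Rightarrow> ('a \<times> 'a) fv) \<Rightarrow> ('a \<times> 'a) fv set" where
  "setC sA sH \<delta> \<tau> = {X.
     fext (\<lambda>(a, a'). fext (\<lambda>(x, h). fmap (\<lambda>(y, z). (x, y, z * a')) (\<tau> h)) (\<delta> a)) X
       - fmap (\<lambda>(a, a'). (a, a', 1)) X \<in> tri_bal_rel sA (coinv sA sH \<delta>)}"

end

theory Submission
  imports Defs
begin

lemma lookup_fsc [simp]: "Poly_Mapping.lookup (fsc c f) x = c * Poly_Mapping.lookup f x"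
  unfolding fsc_def by (simp add: map.rep_eq when_def)

lemma fsc_add [simp]: "fsc c (f + g) = fsc c f + fsc c g"
  by (rule poly_mapping_eqI) (simp add: lookup_add algebra_simps)
lemma fsc_diff [simp]: "fsc c (f - g) = fsc c f - fsc c g"
  by (rule poly_mapping_eqI) (simp add: lookup_minus algebra_simps)
lemma fsc_uminus [simp]: "fsc c (- f) = - fsc c f"
  by (rule poly_mapping_eqI) (simp add: algebra_simps)
lemma fsc_zero [simp]: "fsc c 0 = 0"
  by (rule poly_mapping_eqI) simp
lemma fsc_zero_left [simp]: "fsc 0 f = 0"
  by (rule poly_mapping_eqI) simp
lemma fsc_one [simp]: "fsc 1 f = f"
  by (rule poly_mapping_eqI) simp
lemma fsc_fsc [simp]: "fsc c (fsc d f) = fsc (c * d) f"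
  by (rule poly_mapping_eqI) (simp add: algebra_simps)
lemma fsc_add_left: "fsc (c + d) f = fsc c f + fsc d f"
  by (rule poly_mapping_eqI) (simp add: lookup_add algebra_simps)
lemma fsc_minus_one: "fsc (-1) f = - f"
  by (rule poly_mapping_eqI) simp
lemma fsc_sum: "fsc c (\<Sum>i\<in>I. f i) = (\<Sum>i\<in>I. fsc c (f i))"
  by (induction I rule: infinite_finite_induct) auto

lemma fext_superset:
  assumes "finite K" "Poly_Mapping.keys u \<subseteq> K"
  shows "fext g u = (\<Sum>x\<in>K. fsc (Poly_Mapping.lookup u x) (g x))"
  unfolding vext_def
  by (rule sum.mono_neutral_left) (use assms in \<open>auto simp: in_keys_iff\<close>)

lemma fext_add [simp]: "fext g (u + v) = fext g u + fext g v"
proof -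
  let ?K = "Poly_Mapping.keys u \<union> Poly_Mapping.keys v"
  have "Poly_Mapping.keys (u + v) \<subseteq> ?K" by (rule keys_add)
  then have "fext g (u + v) = (\<Sum>x\<in>?K. fsc (Poly_Mapping.lookup (u+v) x) (g x))"
    by (intro fext_superset) auto
  also have "\<dots> = (\<Sum>x\<in>?K. fsc (Poly_Mapping.lookup u x) (g x)) + (\<Sum>x\<in>?K. fsc (Poly_Mapping.lookup v x) (g x))"
    by (simp add: lookup_add fsc_add_left sum.distrib)
  also have "\<dots> = fext g u + fext g v"
    by (subst (1 2) fext_superset[where K="?K"]) auto
  finally show ?thesis .
qed

lemma fext_zero [simp]: "fext g 0 = 0"
  unfolding vext_def by simp

lemma fext_fsc [simp]: "fext g (fsc c u) = fsc c (fext g u)"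
proof -
  have "Poly_Mapping.keys (fsc c u) \<subseteq> Poly_Mapping.keys u" by (auto simp: in_keys_iff)
  then have "fext g (fsc c u) = (\<Sum>x\<in>Poly_Mapping.keys u. fsc (Poly_Mapping.lookup (fsc c u) x) (g x))"
    by (intro fext_superset) auto
  then show ?thesis by (simp add: vext_def fsc_sum)
qed

lemma fext_uminus [simp]: "fext g (- u) = - fext g u"
  by (metis fext_fsc fsc_minus_one)

lemma fext_diff [simp]: "fext g (u - v) = fext g u - fext g v"
  by (metis diff_conv_add_uminus fext_add fext_uminus)

lemma fext_sum: "fext g (\<Sum>i\<in>I. f i) = (\<Sum>i\<in>I. fext g (f i))"
  by (induction I rule: infinite_finite_induct) auto

lemma fext_gen [simp]: "fext g (gen x) = g x"
  unfolding vext_def gen_def by simp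

lemma fext_cong: "(\<And>x. x \<in> Poly_Mapping.keys u \<Longrightarrow> g x = g' x) \<Longrightarrow> fext g u = fext g' u"
  unfolding vext_def by simp

lemma fext_fun_add: "fext (\<lambda>x. g x + g' x) u = fext g u + fext g' u"
  unfolding vext_def by (simp add: sum.distrib)
lemma fext_fun_fsc: "fext (\<lambda>x. fsc c (g x)) u = fsc c (fext g u)"
  unfolding vext_def by (simp add: fsc_sum mult.commute)
lemma fext_fun_uminus: "fext (\<lambda>x. - g x) u = - fext g u"
  using fext_fun_fsc[of "-1" g u] by (simp add: fsc_minus_one)
lemma fext_fun_diff: "fext (\<lambda>x. g x - g' x) u = fext g u - fext g' u"
  using fext_fun_add[of g "\<lambda>x. - g' x" u] by (simp add: fext_fun_uminus)

lemma fext_comp [simp]: "fext g (fext h u) = fext (\<lambda>x. fext g (h x)) u"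
  by (simp add: vext_def[of fsc h] fext_sum) (simp add: vext_def)

lemma fext_gen_id [simp]: "fext gen u = u"
proof (rule poly_mapping_eqI)
  fix y
  show "Poly_Mapping.lookup (fext gen u) y = Poly_Mapping.lookup u y"
    unfolding vext_def gen_def
    by (simp add: lookup_sum lookup_single when_def in_keys_iff if_distrib[where f="\<lambda>z. _ * z"] sum.delta cong: if_cong)
qed

lemma fmap_gen_id: "fext (\<lambda>x. gen x) u = u"
  using fext_gen_id by (metis eta_contract_eq)



definition fsub :: "'x fv set \<Rightarrow> bool" where
  "fsub R \<longleftrightarrow> 0 \<in> R \<and> (\<forall>u\<in>R. \<forall>v\<in>R. u + v \<in> R) \<and> (\<forall>c. \<forall>u\<in>R. fsc c u \<in> R)"

lemma fsub_add: "fsub R \<Longrightarrow> u \<in> R \<Longrightarrow> v \<in> R \<Longrightarrow> u + v \<in> R"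
  unfolding fsub_def by blast
lemma fsub_fsc: "fsub R \<Longrightarrow> u \<in> R \<Longrightarrow> fsc c u \<in> R"
  unfolding fsub_def by blast
lemma fsub_zero: "fsub R \<Longrightarrow> 0 \<in> R"
  unfolding fsub_def by blast
lemma fsub_uminus: "fsub R \<Longrightarrow> u \<in> R \<Longrightarrow> - u \<in> R"
  by (metis fsc_minus_one fsub_fsc)
lemma fsub_diff: "fsub R \<Longrightarrow> u \<in> R \<Longrightarrow> v \<in> R \<Longrightarrow> u - v \<in> R"
  by (metis diff_conv_add_uminus fsub_add fsub_uminus)
lemma fsub_sum: "fsub R \<Longrightarrow> (\<And>i. i \<in> I \<Longrightarrow> f i \<in> R) \<Longrightarrow> (\<Sum>i\<in>I. f i) \<in> R"
  by (induction I rule: infinite_finite_induct) (auto intro: fsub_add fsub_zero)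

lemma fsub_fspan: "fsub (fspan S)"
  unfolding fsub_def
proof (intro conjI ballI allI)
  show "0 \<in> fspan S" unfolding fspan_def by (rule CollectI, rule exI[of _ "{}"]) auto
next
  fix u v assume "u \<in> fspan S" "v \<in> fspan S"
  then obtain T1 r1 T2 r2 where t: "finite T1" "T1 \<subseteq> S" "u = (\<Sum>v\<in>T1. fsc (r1 v) v)"
     "finite T2" "T2 \<subseteq> S" "v = (\<Sum>v\<in>T2. fsc (r2 v) v)"
    unfolding fspan_def by blast
  define r where "r x = (if x \<in> T1 then r1 x else 0) + (if x \<in> T2 then r2 x else 0)" for x
  have 1: "(\<Sum>x\<in>T1 \<union> T2. fsc (if x \<in> T1 then r1 x else 0) x) = u"
    using t by (subst sum.mono_neutral_cong_right[where S=T1]) auto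
  have 2: "(\<Sum>x\<in>T1 \<union> T2. fsc (if x \<in> T2 then r2 x else 0) x) = v"
    using t by (subst sum.mono_neutral_cong_right[where S=T2]) auto
  have "u + v = (\<Sum>x\<in>T1 \<union> T2. fsc (r x) x)"
    unfolding r_def fsc_add_left sum.distrib 1 2 ..
  then show "u + v \<in> fspan S" unfolding fspan_def using t by blast
next
  fix c u assume "u \<in> fspan S"
  then obtain T r where t: "finite T" "T \<subseteq> S" "u = (\<Sum>v\<in>T. fsc (r v) v)"
    unfolding fspan_def by blast
  then have "fsc c u = (\<Sum>v\<in>T. fsc (c * r v) v)" by (simp add: fsc_sum)
  then show "fsc c u \<in> fspan S" unfolding fspan_def using t(1,2)
    by (intro CollectI exI[of _ T] exI[of _ "\<lambda>v. c * r v"]) auto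
qed

lemma fspan_base: "s \<in> S \<Longrightarrow> s \<in> fspan S"
  unfolding fspan_def by (rule CollectI, rule exI[of _ "{s}"], rule exI[of _ "\<lambda>_. 1"]) auto

lemma fspan_least: "fsub R \<Longrightarrow> S \<subseteq> R \<Longrightarrow> w \<in> fspan S \<Longrightarrow> w \<in> R"
  unfolding fspan_def by (auto intro!: fsub_sum fsub_fsc)

lemma fext_in: "fsub R \<Longrightarrow> (\<And>x. x \<in> Poly_Mapping.keys u \<Longrightarrow> g x \<in> R) \<Longrightarrow> fext g u \<in> R"
  unfolding vext_def by (auto intro!: fsub_sum fsub_fsc)

lemma fext_span: assumes "fsub R" "\<And>s. s \<in> S \<Longrightarrow> fext g s \<in> R" "w \<in> fspan S"
  shows "fext g w \<in> R"
proof -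
  obtain T r where t: "finite T" "T \<subseteq> S" "w = (\<Sum>v\<in>T. fsc (r v) v)"
    using assms(3) unfolding fspan_def by blast
  then have "fext g w = (\<Sum>v\<in>T. fsc (r v) (fext g v))" by (simp add: fext_sum)
  also have "\<dots> \<in> R" using assms t by (auto intro!: fsub_sum fsub_fsc)
  finally show ?thesis .
qed

lemma fsub_bil: "fsub (bil_rel s1 s2)" unfolding bil_rel_def by (rule fsub_fspan)
lemma fsub_tri: "fsub (tri_rel s1 s2 s3)" unfolding tri_rel_def by (rule fsub_fspan)
lemma fsub_bal: "fsub (bal_rel s1 B)" unfolding bal_rel_def by (rule fsub_fspan)
lemma fsub_tribal: "fsub (tri_bal_rel s1 B)" unfolding tri_bal_rel_def by (rule fsub_fspan)

lemma bil_sub_bal: "w \<in> bil_rel sA sA \<Longrightarrow> w \<in> bal_rel sA B"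
  unfolding bal_rel_def by (rule fspan_base) simp
lemma tri_sub_tribal: "w \<in> tri_rel sA sA sA \<Longrightarrow> w \<in> tri_bal_rel sA B"
  unfolding tri_bal_rel_def by (rule fspan_base) simp



definition Lm :: "'a::times \<Rightarrow> ('a \<times> 'b) fv \<Rightarrow> ('a \<times> 'b) fv" where
  "Lm y w = fext (\<lambda>(u, h). gen (y * u, h)) w"

definition Ein :: "'a \<Rightarrow> 'b fv \<Rightarrow> ('a \<times> 'b) fv" where
  "Ein a w = fext (\<lambda>q. gen (a, q)) w"

definition mulR :: "('a::times \<times> 'h::times) fv \<Rightarrow> ('a \<times> 'h) fv \<Rightarrow> ('a \<times> 'h) fv" where
  "mulR v w = fext (\<lambda>(x, h). fext (\<lambda>(y, k). gen (x * y, h * k)) v) w"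

lemma mulR_fprod: "fprod (\<lambda>(x, h) (y, k). (x * y, h * k)) w v = mulR v w"
  unfolding fprod_def mulR_def by (rule fext_cong) (auto intro!: fext_cong)

lemma bil_g1: "gen (x + x', y) - gen (x, y) - gen (x', y) \<in> bil_rel sv sw"
  unfolding bil_rel_def by (rule fspan_base, rule UnI1, rule UnI1, rule UnI1) blast
lemma bil_g2: "gen (x, y + y') - gen (x, y) - gen (x, y') \<in> bil_rel sv sw"
  unfolding bil_rel_def by (rule fspan_base, rule UnI1, rule UnI1, rule UnI2) blast
lemma bil_g3: "gen (sv c x, y) - fsc c (gen (x, y)) \<in> bil_rel sv sw"
  unfolding bil_rel_def by (rule fspan_base, rule UnI1, rule UnI2) blast
lemma bil_g4: "gen (x, sw c y) - fsc c (gen (x, y)) \<in> bil_rel sv sw"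
  unfolding bil_rel_def by (rule fspan_base, rule UnI2) blast
lemmas bil_gens = bil_g1 bil_g2 bil_g3 bil_g4

lemma tri_g1: "gen (x + x', y, z) - gen (x, y, z) - gen (x', y, z) \<in> tri_rel su sv sw"
  unfolding tri_rel_def by (rule fspan_base, rule UnI1, rule UnI1, rule UnI1, rule UnI1, rule UnI1) blast
lemma tri_g2: "gen (x, y + y', z) - gen (x, y, z) - gen (x, y', z) \<in> tri_rel su sv sw"
  unfolding tri_rel_def by (rule fspan_base, rule UnI1, rule UnI1, rule UnI1, rule UnI1, rule UnI2) blast
lemma tri_g3: "gen (x, y, z + z') - gen (x, y, z) - gen (x, y, z') \<in> tri_rel su sv sw"
  unfolding tri_rel_def by (rule fspan_base, rule UnI1, rule UnI1, rule UnI1, rule UnI2) blast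
lemma tri_g4: "gen (su c x, y, z) - fsc c (gen (x, y, z)) \<in> tri_rel su sv sw"
  unfolding tri_rel_def by (rule fspan_base, rule UnI1, rule UnI1, rule UnI2) blast
lemma tri_g5: "gen (x, sv c y, z) - fsc c (gen (x, y, z)) \<in> tri_rel su sv sw"
  unfolding tri_rel_def by (rule fspan_base, rule UnI1, rule UnI2) blast
lemma tri_g6: "gen (x, y, sw c z) - fsc c (gen (x, y, z)) \<in> tri_rel su sv sw"
  unfolding tri_rel_def by (rule fspan_base, rule UnI2) blast
lemmas tri_gens = tri_g1 tri_g2 tri_g3 tri_g4 tri_g5 tri_g6

lemma bal_g: "b \<in> B \<Longrightarrow> gen (a * b, a') - gen (a, b * a') \<in> bal_rel sA B"
  unfolding bal_rel_def by (rule fspan_base) blast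
lemma tribal_g: "b \<in> B \<Longrightarrow> gen (x, y * b, z) - gen (x, y, b * z) \<in> tri_bal_rel sA B"
  unfolding tri_bal_rel_def by (rule fspan_base) blast

lemma Lm_bil: assumes "calg sA" "w \<in> bil_rel sA sX" shows "Lm y w \<in> bil_rel sA sX"
proof -
  have sc: "\<And>c x y. sA c (x*y) = x * sA c y" using assms(1) unfolding calg_def by metis
  show ?thesis unfolding Lm_def
    apply (rule fext_span[OF fsub_bil _ assms(2)[unfolded bil_rel_def]])
    apply (elim UnE CollectE exE conjE)
       apply (auto simp: distrib_left sc[symmetric] intro: bil_gens)
    done
qed


lemma Lm_add [simp]: "Lm y (u + v) = Lm y u + Lm y v" unfolding Lm_def by simp
lemma Lm_diff [simp]: "Lm y (u - v) = Lm y u - Lm y v" unfolding Lm_def by simp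
lemma Lm_fsc [simp]: "Lm y (fsc c u) = fsc c (Lm y u)" unfolding Lm_def by simp
lemma Lm_gen [simp]: "Lm y (gen (u, h)) = gen (y * u, h)" unfolding Lm_def by simp
lemma Lm_fext: "Lm y (fext g u) = fext (\<lambda>x. Lm y (g x)) u" unfolding Lm_def by simp
lemma Ein_add [simp]: "Ein a (u + v) = Ein a u + Ein a v" unfolding Ein_def by simp
lemma Ein_diff [simp]: "Ein a (u - v) = Ein a u - Ein a v" unfolding Ein_def by simp
lemma Ein_fsc [simp]: "Ein a (fsc c u) = fsc c (Ein a u)" unfolding Ein_def by simp
lemma Ein_gen [simp]: "Ein a (gen q) = gen (a, q)" unfolding Ein_def by simp
lemma Ein_fext: "Ein a (fext g u) = fext (\<lambda>x. Ein a (g x)) u" unfolding Ein_def by simp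
lemma mulR_add [simp]: "mulR v (u + w) = mulR v u + mulR v w" unfolding mulR_def by simp
lemma mulR_diff [simp]: "mulR v (u - w) = mulR v u - mulR v w" unfolding mulR_def by simp
lemma mulR_fsc [simp]: "mulR v (fsc c u) = fsc c (mulR v u)" unfolding mulR_def by simp
lemma mulR_gen [simp]: "mulR v (gen (x, h)) = fext (\<lambda>(y, k). gen (x * y, h * k)) v"
  unfolding mulR_def by simp
lemma mulR_fext: "mulR v (fext g u) = fext (\<lambda>x. mulR v (g x)) u" unfolding mulR_def by simp


lemma Lm_Lm: "Lm y (Lm p w) = Lm (y * (p::'a::semigroup_mult)) w"
  unfolding Lm_def fext_comp
  by (rule fext_cong) (auto simp: mult.assoc split: prod.split)

lemma Lm_one: "Lm (1::'a::monoid_mult) w = w"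
proof -
  have "Lm (1::'a) w = fext gen w" unfolding Lm_def
    by (rule fext_cong) (auto split: prod.split)
  then show ?thesis by simp
qed

lemma Lm_mulR: "Lm y (mulR v w) = mulR v (Lm (y::'a::semigroup_mult) w)"
  unfolding Lm_def mulR_def fext_comp
  by (rule fext_cong) (auto simp: mult.assoc split: prod.split intro!: fext_cong)

lemma fext3_in: "fsub R \<Longrightarrow> (\<And>a b. g1 (a, b) - g2 (a, b) - g3 (a, b) \<in> R)
   \<Longrightarrow> fext g1 v - fext g2 v - fext g3 v \<in> R"
  unfolding fext_fun_diff[symmetric] by (rule fext_in) auto

lemma fext2_in: "fsub R \<Longrightarrow> (\<And>a b. g1 (a, b) - fsc c (g2 (a, b)) \<in> R)
   \<Longrightarrow> fext g1 v - fsc c (fext g2 v) \<in> R"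
  unfolding fext_fun_fsc[symmetric] fext_fun_diff[symmetric] by (rule fext_in) auto

lemma fext2'_in: "fsub R \<Longrightarrow> (\<And>a b. g1 (a, b) - g2 (a, b) \<in> R)
   \<Longrightarrow> fext g1 v - fext g2 v \<in> R"
  unfolding fext_fun_diff[symmetric] by (rule fext_in) auto

lemma calg_l: "calg sA \<Longrightarrow> sA c (x * y) = x * sA c y"
  unfolding calg_def by metis
lemma calg_r: "calg sA \<Longrightarrow> sA c (x * y) = sA c x * y"
  unfolding calg_def by metis

lemma Lm_bal: assumes "calg sA" "w \<in> bal_rel sA B" shows "Lm y w \<in> bal_rel sA B"
proof -
  show ?thesis
    unfolding Lm_def apply (rule fext_span[OF fsub_bal _ assms(2)[unfolded bal_rel_def]])
    apply (elim UnE CollectE exE conjE)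
     apply (rule bil_sub_bal, erule Lm_bil[OF assms(1), unfolded Lm_def])
    apply (simp add: mult.assoc[symmetric] bal_g)
    done
qed


lemma mulR_bil: assumes "calg sA" "calg sH" "w \<in> bil_rel sA sH" shows "mulR v w \<in> bil_rel sA sH"
proof -
  show ?thesis
    unfolding mulR_def apply (rule fext_span[OF fsub_bil _ assms(3)[unfolded bil_rel_def]])
    apply (elim UnE CollectE exE conjE)
       apply (simp_all add: fext2_in fext3_in fsub_bil distrib_right calg_r[OF assms(1), symmetric]
        calg_r[OF assms(2), symmetric] bil_gens)
    done
qed


lemma Ein_bil: assumes "w \<in> bil_rel s1 s2" shows "Ein a w \<in> tri_rel s0 s1 s2"
  unfolding Ein_def apply (rule fext_span[OF fsub_tri _ assms(1)[unfolded bil_rel_def]])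
  apply (elim UnE CollectE exE conjE)
     apply (simp_all add: tri_gens)
  done

lemma Ein_bal: assumes "w \<in> bal_rel sA B" shows "Ein a w \<in> tri_bal_rel sA B"
  unfolding Ein_def apply (rule fext_span[OF fsub_tribal _ assms(1)[unfolded bal_rel_def]])
  apply (elim UnE CollectE exE conjE)
   apply (rule tri_sub_tribal, erule Ein_bil[unfolded Ein_def])
  apply (simp add: tribal_g)
  done


lemma Ein_addx: "Ein (x + x') w - Ein x w - Ein x' w \<in> tri_rel s0 s1 s2"
  unfolding Ein_def by (rule fext3_in[OF fsub_tri]) (simp add: tri_g1)
lemma Ein_scx: "Ein (s0 c x) w - fsc c (Ein x w) \<in> tri_rel s0 s1 s2"
  unfolding Ein_def by (rule fext2_in[OF fsub_tri]) (simp add: tri_g4)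
lemma Lm_addy: "Lm ((y::'a::ring) + y') w - Lm y w - Lm y' w \<in> bil_rel sA sX"
  unfolding Lm_def by (rule fext3_in[OF fsub_bil]) (simp add: distrib_right bil_g1)
lemma Lm_scy: "calg sA \<Longrightarrow> Lm (sA c y) w - fsc c (Lm y w) \<in> bil_rel sA sX"
  unfolding Lm_def by (rule fext2_in[OF fsub_bil]) (simp add: calg_r[of sA, symmetric] bil_g3)




locale HG =
  fixes sA :: "complex \<Rightarrow> 'a::ring_1 \<Rightarrow> 'a"
    and sH :: "complex \<Rightarrow> 'h::ring_1 \<Rightarrow> 'h"
    and \<delta> :: "'a \<Rightarrow> ('a \<times> 'h) fv" and \<tau> :: "'h \<Rightarrow> ('a \<times> 'a) fv"
  assumes ca: "calg sA" and ch: "calg sH"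
    and dadd: "\<And>a a'. \<delta> (a + a') - (\<delta> a + \<delta> a') \<in> bil_rel sA sH"
    and dsc: "\<And>c a. \<delta> (sA c a) - fsc c (\<delta> a) \<in> bil_rel sA sH"
    and d1: "\<delta> 1 - gen (1, 1) \<in> bil_rel sA sH"
    and dmul: "\<And>a a'. \<delta> (a * a') - mulR (\<delta> a') (\<delta> a) \<in> bil_rel sA sH"
    and ginj: "\<And>f f'. galois_map \<delta> f - galois_map \<delta> f' \<in> bil_rel sA sH
              \<Longrightarrow> f - f' \<in> bal_rel sA (coinv sA sH \<delta>)"
    and tm: "\<And>h. galois_map \<delta> (\<tau> h) - gen (1, h) \<in> bil_rel sA sH"
begin

abbreviation "BB \<equiv> coinv sA sH \<delta>"

definition chi :: "('a \<times> 'a) fv \<Rightarrow> ('a \<times> 'h) fv" where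
  "chi f = fext (\<lambda>(y, z). Lm y (\<delta> z)) f"
definition Phi :: "('a \<times> 'a \<times> 'a) fv \<Rightarrow> ('a \<times> 'a \<times> 'h) fv" where
  "Phi w = fext (\<lambda>(a, y, z). Ein a (Lm y (\<delta> z))) w"
definition Psi :: "('a \<times> 'a \<times> 'h) fv \<Rightarrow> ('a \<times> 'a \<times> 'a) fv" where
  "Psi w = fext (\<lambda>(a, y, h). Ein a (Lm y (\<tau> h))) w"
definition Tinv :: "('a \<times> 'h) fv \<Rightarrow> ('a \<times> 'a) fv" where
  "Tinv u = fext (\<lambda>(p, h). Lm p (\<tau> h)) u"

lemma gm_chi: "galois_map \<delta> f = chi f"
  unfolding galois_map_def chi_def Lm_def fmap_def
  by (rule fext_cong) (auto intro!: fext_cong)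

lemma chi_add [simp]: "chi (u + v) = chi u + chi v" unfolding chi_def by simp
lemma chi_diff [simp]: "chi (u - v) = chi u - chi v" unfolding chi_def by simp
lemma chi_fsc [simp]: "chi (fsc c u) = fsc c (chi u)" unfolding chi_def by simp
lemma chi_gen [simp]: "chi (gen (y, z)) = Lm y (\<delta> z)" unfolding chi_def by simp

lemma chi_Lm: "chi (Lm x f) = Lm x (chi f)"
  unfolding chi_def Lm_def[of x f] fext_comp Lm_fext
  by (rule fext_cong) (auto simp: Lm_Lm split: prod.split)

lemma inj': "chi f - chi f' \<in> bil_rel sA sH \<Longrightarrow> f - f' \<in> bal_rel sA BB"
  using ginj by (simp add: gm_chi)

lemma tm': "chi (\<tau> h) - gen (1, h) \<in> bil_rel sA sH"
  using tm by (simp add: gm_chi)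

lemma tau_add: "\<tau> (h + h') - (\<tau> h + \<tau> h') \<in> bal_rel sA BB"
proof (rule inj')
  have "chi (\<tau> (h + h')) - chi (\<tau> h + \<tau> h') = (chi (\<tau> (h + h')) - gen (1, h + h'))
     - (chi (\<tau> h) - gen (1, h)) - (chi (\<tau> h') - gen (1, h')) + (gen (1, h + h') - gen (1, h) - gen (1, h'))"
    by (simp add: algebra_simps)
  also have "\<dots> \<in> bil_rel sA sH"
    by (intro fsub_add[OF fsub_bil] fsub_diff[OF fsub_bil] tm' bil_g2)
  finally show "chi (\<tau> (h + h')) - chi (\<tau> h + \<tau> h') \<in> bil_rel sA sH" .
qed

lemma tau_sc: "\<tau> (sH c h) - fsc c (\<tau> h) \<in> bal_rel sA BB"
proof (rule inj')
  have "chi (\<tau> (sH c h)) - chi (fsc c (\<tau> h)) = (chi (\<tau> (sH c h)) - gen (1, sH c h))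
     - fsc c (chi (\<tau> h) - gen (1, h)) + (gen (1, sH c h) - fsc c (gen (1, h)))"
    by (simp add: algebra_simps)
  also have "\<dots> \<in> bil_rel sA sH"
    by (intro fsub_add[OF fsub_bil] fsub_diff[OF fsub_bil] fsub_fsc[OF fsub_bil] tm' bil_g4)
  finally show "chi (\<tau> (sH c h)) - chi (fsc c (\<tau> h)) \<in> bil_rel sA sH" .
qed


lemma Tinv_delta: "Tinv (\<delta> z) - gen (1, z) \<in> bal_rel sA BB"
proof (rule inj')
  have c1: "chi (Tinv u) = fext (\<lambda>(p, h). Lm p (chi (\<tau> h))) u" for u
    unfolding Tinv_def chi_def[of "fext _ _"] fext_comp
    by (rule fext_cong) (auto simp: chi_Lm[unfolded chi_def] chi_def split: prod.split)
  have c2: "chi (gen (1, z)) = fext (\<lambda>(p, h). Lm p (gen (1, h))) (\<delta> z)"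
    by (simp add: Lm_one)
  have "chi (Tinv (\<delta> z)) - chi (gen (1, z)) = fext (\<lambda>(p, h). Lm p (chi (\<tau> h) - gen (1, h))) (\<delta> z)"
    unfolding c1 c2 fext_fun_diff[symmetric]
    by (rule fext_cong) (auto split: prod.split)
  also have "\<dots> \<in> bil_rel sA sH"
    by (rule fext_in[OF fsub_bil]) (auto intro: Lm_bil[OF ca tm', simplified])
  finally show "chi (Tinv (\<delta> z)) - chi (gen (1, z)) \<in> bil_rel sA sH" .
qed


lemma P2: "Ein x (Lm (y + y') L) - Ein x (Lm y L) - Ein x (Lm y' L) \<in> tri_rel s0 sA sX"
proof -
  have "Ein x (Lm (y + y') L) - Ein x (Lm y L) - Ein x (Lm y' L) = Ein x (Lm (y + y') L - Lm y L - Lm y' L)"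
    by simp
  also have "\<dots> \<in> tri_rel s0 sA sX" by (intro Ein_bil Lm_addy)
  finally show ?thesis .
qed

lemma P3: "Ein x (Lm y (\<delta> (z + z'))) - Ein x (Lm y (\<delta> z)) - Ein x (Lm y (\<delta> z')) \<in> tri_rel s0 sA sH"
proof -
  have "Ein x (Lm y (\<delta> (z + z'))) - Ein x (Lm y (\<delta> z)) - Ein x (Lm y (\<delta> z'))
     = Ein x (Lm y (\<delta> (z + z') - (\<delta> z + \<delta> z')))"
    by (simp add: algebra_simps)
  also have "\<dots> \<in> tri_rel s0 sA sH" by (intro Ein_bil Lm_bil[OF ca] dadd)
  finally show ?thesis .
qed

lemma P5: "Ein x (Lm (sA c y) L) - fsc c (Ein x (Lm y L)) \<in> tri_rel s0 sA sX"
proof -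
  have "Ein x (Lm (sA c y) L) - fsc c (Ein x (Lm y L)) = Ein x (Lm (sA c y) L - fsc c (Lm y L))"
    by simp
  also have "\<dots> \<in> tri_rel s0 sA sX" by (intro Ein_bil Lm_scy ca)
  finally show ?thesis .
qed

lemma P6: "Ein x (Lm y (\<delta> (sA c z))) - fsc c (Ein x (Lm y (\<delta> z))) \<in> tri_rel s0 sA sH"
proof -
  have "Ein x (Lm y (\<delta> (sA c z))) - fsc c (Ein x (Lm y (\<delta> z)))
     = Ein x (Lm y (\<delta> (sA c z) - fsc c (\<delta> z)))"
    by simp
  also have "\<dots> \<in> tri_rel s0 sA sH" by (intro Ein_bil Lm_bil[OF ca] dsc)
  finally show ?thesis .
qed

lemma Lm_b: assumes "b \<in> BB" shows "Lm b (\<delta> z) - \<delta> (b * z) \<in> bil_rel sA sH"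
proof -
  have bb: "\<delta> b - gen (b, 1) \<in> bil_rel sA sH" using assms unfolding coinv_def by simp
  have e: "Lm b (\<delta> z) = mulR (\<delta> z) (gen (b, 1))"
    unfolding Lm_def by (simp add: case_prod_unfold)
  have "Lm b (\<delta> z) - \<delta> (b * z) = - ((\<delta> (b * z) - mulR (\<delta> z) (\<delta> b)) + mulR (\<delta> z) (\<delta> b - gen (b, 1)))"
    unfolding e by (simp add: algebra_simps)
  also have "\<dots> \<in> bil_rel sA sH"
    by (intro fsub_uminus[OF fsub_bil] fsub_add[OF fsub_bil] dmul mulR_bil[OF ca ch] bb)
  finally show ?thesis .
qed

lemma P7: assumes "b \<in> BB"
  shows "Ein x (Lm (y * b) (\<delta> z)) - Ein x (Lm y (\<delta> (b * z))) \<in> tri_rel s0 sA sH"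
proof -
  have "Ein x (Lm (y * b) (\<delta> z)) - Ein x (Lm y (\<delta> (b * z))) = Ein x (Lm y (Lm b (\<delta> z) - \<delta> (b * z)))"
    by (simp add: Lm_Lm)
  also have "\<dots> \<in> tri_rel s0 sA sH" by (intro Ein_bil Lm_bil[OF ca] Lm_b assms)
  finally show ?thesis .
qed

lemma Phi_tri: assumes "w \<in> tri_rel sA sA sA" shows "Phi w \<in> tri_rel sA sA sH"
  unfolding Phi_def
  apply (rule fext_span[OF fsub_tri _ assms[unfolded tri_rel_def]])
  apply (elim UnE CollectE exE conjE)
       apply (simp_all add: Ein_addx Ein_scx P2 P3 P5 P6)
  done

lemma Phi_rel: assumes "w \<in> tri_bal_rel sA BB" shows "Phi w \<in> tri_rel sA sA sH"
  unfolding Phi_def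
  apply (rule fext_span[OF fsub_tri _ assms[unfolded tri_bal_rel_def]])
  apply (elim UnE CollectE exE conjE)
   apply (erule Phi_tri[unfolded Phi_def])
  apply (simp add: P7)
  done


lemma Psi_tri: assumes "w \<in> tri_rel sA sA sH" shows "Psi w \<in> tri_bal_rel sA BB"
proof -
  have g3: "Ein x (Lm y (\<tau> (h + h'))) - Ein x (Lm y (\<tau> h)) - Ein x (Lm y (\<tau> h'))
      \<in> tri_bal_rel sA BB" for x y h h'
  proof -
    have "Ein x (Lm y (\<tau> (h + h'))) - Ein x (Lm y (\<tau> h)) - Ein x (Lm y (\<tau> h'))
       = Ein x (Lm y (\<tau> (h + h') - (\<tau> h + \<tau> h')))"
      by (simp add: algebra_simps)
    also have "\<dots> \<in> tri_bal_rel sA BB" by (intro Ein_bal Lm_bal[OF ca] tau_add)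
    finally show ?thesis .
  qed
  have g6: "Ein x (Lm y (\<tau> (sH c h))) - fsc c (Ein x (Lm y (\<tau> h))) \<in> tri_bal_rel sA BB" for x y c h
  proof -
    have "Ein x (Lm y (\<tau> (sH c h))) - fsc c (Ein x (Lm y (\<tau> h)))
       = Ein x (Lm y (\<tau> (sH c h) - fsc c (\<tau> h)))"
      by simp
    also have "\<dots> \<in> tri_bal_rel sA BB" by (intro Ein_bal Lm_bal[OF ca] tau_sc)
    finally show ?thesis .
  qed
  show ?thesis
  unfolding Psi_def
  apply (rule fext_span[OF fsub_tribal _ assms[unfolded tri_rel_def]])
  apply (elim UnE CollectE exE conjE)
       apply (simp_all add: g3 g6 tri_sub_tribal Ein_addx Ein_scx P2 P5)
  done
qed

lemma Psi_fext: "Psi (fext g u) = fext (\<lambda>x. Psi (g x)) u" unfolding Psi_def by simp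
lemma Phi_fext: "Phi (fext g u) = fext (\<lambda>x. Phi (g x)) u" unfolding Phi_def by simp
lemma Psi_diff: "Psi (u - v) = Psi u - Psi v" unfolding Psi_def by simp
lemma Phi_diff: "Phi (u - v) = Phi u - Phi v" unfolding Phi_def by simp

lemma Psi_EL: "Psi (Ein a (Lm y u)) = Ein a (Lm y (Tinv u))"
  unfolding Lm_def[of y u] Tinv_def Ein_fext Psi_fext Lm_fext
  by (rule fext_cong) (auto simp: Psi_def Lm_Lm split: prod.split)

lemma PsiPhi: "Psi (Phi w) - w \<in> tri_bal_rel sA BB"
proof -
  have e: "Psi (Phi w) - w = fext (\<lambda>x. Psi (Phi (gen x)) - gen x) w"
    unfolding fext_fun_diff fext_gen_id by (simp add: Phi_def Psi_fext)
  have "Psi (Phi (gen (a, y, z))) - gen (a, y, z) \<in> tri_bal_rel sA BB" for a y z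
  proof -
    have "Psi (Phi (gen (a, y, z))) - gen (a, y, z) = Ein a (Lm y (Tinv (\<delta> z) - gen (1, z)))"
      by (simp add: Phi_def Psi_EL)
    also have "\<dots> \<in> tri_bal_rel sA BB" by (intro Ein_bal Lm_bal[OF ca] Tinv_delta)
    finally show ?thesis .
  qed
  then show ?thesis unfolding e by (intro fext_in[OF fsub_tribal]) auto
qed


lemma K2: "Phi (fmap (\<lambda>(a, a'). (a, a', 1)) X) - fmap (\<lambda>(a, a'). (a, a', 1)) X \<in> tri_rel sA sA sH"
proof -
  have e: "Phi (fmap (\<lambda>(a, a'). (a, a', 1)) X) - fmap (\<lambda>(a, a'). (a, a', 1)) X
     = fext (\<lambda>x. Phi (gen (case x of (a, a') \<Rightarrow> (a, a', 1))) - gen (case x of (a, a') \<Rightarrow> (a, a', 1))) X"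
    unfolding fext_fun_diff fmap_def Phi_fext ..
  have "Phi (gen (a, a', 1)) - gen (a, a', 1) \<in> tri_rel sA sA sH" for a a'
  proof -
    have "Phi (gen (a, a', 1)) - gen (a, a', 1) = Ein a (Lm a' (\<delta> 1 - gen (1, 1)))"
      by (simp add: Phi_def)
    also have "\<dots> \<in> tri_rel sA sA sH" by (intro Ein_bil Lm_bil[OF ca] d1)
    finally show ?thesis .
  qed
  then show ?thesis unfolding e by (intro fext_in[OF fsub_tri]) (auto split: prod.split)
qed

lemma K1inner: "Phi (fmap (\<lambda>(y, z). (x, y, z * a')) (\<tau> h)) - Ein x (mulR (\<delta> a') (gen (1, h)))
   \<in> tri_rel sA sA sH"
proof -
  have e1: "Phi (fmap (\<lambda>(y, z). (x, y, z * a')) (\<tau> h)) = Ein x (fext (\<lambda>(y, z). Lm y (\<delta> (z * a'))) (\<tau> h))"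
    unfolding fmap_def Phi_fext Ein_fext
    by (rule fext_cong) (auto simp: Phi_def split: prod.split)
  have e2: "mulR (\<delta> a') (chi (\<tau> h)) = fext (\<lambda>(y, z). Lm y (mulR (\<delta> a') (\<delta> z))) (\<tau> h)"
    unfolding chi_def mulR_fext
    by (rule fext_cong) (auto simp: Lm_mulR split: prod.split)
  have "fext (\<lambda>(y, z). Lm y (\<delta> (z * a'))) (\<tau> h) - mulR (\<delta> a') (gen (1, h))
     = fext (\<lambda>(y, z). Lm y (\<delta> (z * a') - mulR (\<delta> a') (\<delta> z))) (\<tau> h)
       + mulR (\<delta> a') (chi (\<tau> h) - gen (1, h))"
  proof -
    have "fext (\<lambda>(y, z). Lm y (\<delta> (z * a') - mulR (\<delta> a') (\<delta> z))) (\<tau> h)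
       = fext (\<lambda>(y, z). Lm y (\<delta> (z * a'))) (\<tau> h) - fext (\<lambda>(y, z). Lm y (mulR (\<delta> a') (\<delta> z))) (\<tau> h)"
      unfolding fext_fun_diff[symmetric] by (rule fext_cong) (auto split: prod.split)
    then show ?thesis unfolding mulR_diff e2 by (simp add: algebra_simps)
  qed
  also have "\<dots> \<in> bil_rel sA sH"
    by (intro fsub_add[OF fsub_bil] fext_in[OF fsub_bil] mulR_bil[OF ca ch] tm')
      (auto split: prod.split intro: Lm_bil[OF ca dmul, simplified])
  finally have "Ein x (fext (\<lambda>(y, z). Lm y (\<delta> (z * a'))) (\<tau> h) - mulR (\<delta> a') (gen (1, h))) \<in> tri_rel sA sA sH"
    by (rule Ein_bil)
  then show ?thesis unfolding e1 by simp
qed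

lemma K1: "Phi (fext (\<lambda>(a, a'). fext (\<lambda>(x, h). fmap (\<lambda>(y, z). (x, y, z * a')) (\<tau> h)) (\<delta> a)) X)
   - fext (\<lambda>(a, a'). fprod (\<lambda>(x, h) (y, k). (x, y, h * k)) (\<delta> a) (\<delta> a')) X \<in> tri_rel sA sA sH"
proof -
  have fp: "fprod (\<lambda>(x, h) (y, k). (x, y, h * k)) (\<delta> a) (\<delta> a')
      = fext (\<lambda>(x, h). Ein x (mulR (\<delta> a') (gen (1, h)))) (\<delta> a)" for a a'
    unfolding fprod_def
    by (rule fext_cong) (auto simp: Ein_fext split: prod.split intro!: fext_cong)
  have inner: "Phi (fext (\<lambda>(x, h). fmap (\<lambda>(y, z). (x, y, z * a')) (\<tau> h)) (\<delta> a))
       - fprod (\<lambda>(x, h) (y, k). (x, y, h * k)) (\<delta> a) (\<delta> a') \<in> tri_rel sA sA sH" for a a'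
  proof -
    have "Phi (fext (\<lambda>(x, h). fmap (\<lambda>(y, z). (x, y, z * a')) (\<tau> h)) (\<delta> a))
       - fprod (\<lambda>(x, h) (y, k). (x, y, h * k)) (\<delta> a) (\<delta> a')
       = fext (\<lambda>(x, h). Phi (fmap (\<lambda>(y, z). (x, y, z * a')) (\<tau> h)) - Ein x (mulR (\<delta> a') (gen (1, h)))) (\<delta> a)"
      unfolding fp Phi_fext fext_fun_diff[symmetric]
      by (rule fext_cong) (auto split: prod.split)
    also have "\<dots> \<in> tri_rel sA sA sH"
      by (rule fext_in[OF fsub_tri]) (auto split: prod.split intro: K1inner[simplified])
    finally show ?thesis .
  qed
  show ?thesis
    unfolding Phi_fext fext_fun_diff[symmetric]
    by (rule fext_in[OF fsub_tri]) (auto split: prod.split intro: inner)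
qed

lemma main_eq: "tensor_coinv sA sH \<delta> = setC sA sH \<delta> \<tau>"
proof (intro set_eqI iffI)
  fix X
  let ?L1 = "fext (\<lambda>(a, a'). fprod (\<lambda>(x, h) (y, k). (x, y, h * k)) (\<delta> a) (\<delta> a')) X"
  let ?L2 = "fext (\<lambda>(a, a'). fext (\<lambda>(x, h). fmap (\<lambda>(y, z). (x, y, z * a')) (\<tau> h)) (\<delta> a)) X"
  let ?M = "fmap (\<lambda>(a, a'). (a, a', 1)) X"
  {
    assume "X \<in> tensor_coinv sA sH \<delta>"
    then have e: "?L1 - ?M \<in> tri_rel sA sA sH" unfolding tensor_coinv_def by simp
    have "?L2 - ?M = - (Psi (Phi ?L2) - ?L2) - Psi (?L1 - Phi ?L2) + Psi (?L1 - ?M)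
        + Psi (?M - Phi ?M) + (Psi (Phi ?M) - ?M)"
      by (simp add: Psi_diff algebra_simps)
    also have "\<dots> \<in> tri_bal_rel sA BB"
      by (intro fsub_add[OF fsub_tribal] fsub_diff[OF fsub_tribal] fsub_uminus[OF fsub_tribal]
          PsiPhi Psi_tri e fsub_uminus[OF fsub_tri, of "Phi _ - _", simplified] K1 K2)
    finally show "X \<in> setC sA sH \<delta> \<tau>" unfolding setC_def by simp
  next
    assume "X \<in> setC sA sH \<delta> \<tau>"
    then have e: "?L2 - ?M \<in> tri_bal_rel sA BB" unfolding setC_def by simp
    have "?L1 - ?M = - (Phi ?L2 - ?L1) + Phi (?L2 - ?M) + (Phi ?M - ?M)"
      by (simp add: Phi_diff algebra_simps)
    also have "\<dots> \<in> tri_rel sA sA sH"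
      by (intro fsub_add[OF fsub_tri] fsub_uminus[OF fsub_tri] Phi_rel e K1 K2)
    finally show "X \<in> tensor_coinv sA sH \<delta>" unfolding tensor_coinv_def by simp
  }
qed

end

theorem lemma3p1:
  fixes sA :: "complex \<Rightarrow> 'a::ring_1 \<Rightarrow> 'a"
    and sH :: "complex \<Rightarrow> 'h::ring_1 \<Rightarrow> 'h"
    and \<Delta> :: "'h \<Rightarrow> ('h \<times> 'h) fv" and \<epsilon> :: "'h \<Rightarrow> complex" and S :: "'h \<Rightarrow> 'h"
    and \<delta> :: "'a \<Rightarrow> ('a \<times> 'h) fv" and \<tau> :: "'h \<Rightarrow> ('a \<times> 'a) fv"
  assumes "hopf_algebra sH \<Delta> \<epsilon> S"
    and "comodule_algebra sA sH \<Delta> \<epsilon> \<delta>"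
    and "hopf_galois sA sH \<delta>"
    and "translation_map sA sH \<delta> \<tau>"
  shows "tensor_coinv sA sH \<delta> = setC sA sH \<delta> \<tau>"
proof -
  interpret HG sA sH \<delta> \<tau>
  proof
    show "calg sA" using assms(2) unfolding comodule_algebra_def by blast
    show "calg sH" using assms(1) unfolding hopf_algebra_def by blast
    show "\<And>a a'. \<delta> (a + a') - (\<delta> a + \<delta> a') \<in> bil_rel sA sH"
      using assms(2) unfolding comodule_algebra_def by blast
    show "\<And>c a. \<delta> (sA c a) - fsc c (\<delta> a) \<in> bil_rel sA sH"
      using assms(2) unfolding comodule_algebra_def by blast
    show "\<delta> 1 - gen (1, 1) \<in> bil_rel sA sH"
      using assms(2) unfolding comodule_algebra_def by blast
    show "\<And>a a'. \<delta> (a * a') - mulR (\<delta> a') (\<delta> a) \<in> bil_rel sA sH"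
      using assms(2) unfolding comodule_algebra_def mulR_fprod by blast
    show "\<And>f f'. galois_map \<delta> f - galois_map \<delta> f' \<in> bil_rel sA sH
              \<Longrightarrow> f - f' \<in> bal_rel sA (coinv sA sH \<delta>)"
      using assms(3) unfolding hopf_galois_def by blast
    show "\<And>h. galois_map \<delta> (\<tau> h) - gen (1, h) \<in> bil_rel sA sH"
      using assms(4) unfolding translation_map_def by blast
  qed
  show ?thesis by (rule main_eq)
qed

end
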